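(* Let $G$ be a simple signed digraph without vertices of in-degree $0$ or $2$. Then at least one Boolean network on $G$ is not synchronizing.
   Context: A signed digraph on $V$ is $(V,E)$ with $E\subseteq V\times V\times\{-1,1\}$ (arc from $j$ to $i$ of sign $s$; loops allowed); it is simple if it never has both a positive and a negative arc from one vertex to another. In-degree counts in-neighbors. A Boolean network (BN) is $f:\{0,1\}^V\to\{0,1\}^V$; its signed interaction digraph has a positive (negative) arc from $j$ to $i$ iff for some $x$ with $x_j=0$, $f_i(x+e_j)-f_i(x)$ is positive (negative). A BN on $G$ is one whose signed interaction digraph is $G$. $f^i(x)$ is $x$ with $x_i$ replaced by $f_i(x)$; $f^{i_1\cdots i_\ell}=f^{i_\ell}\circ\cdots\circ f^{i_1}$; $f$ is synchronizing if $f^w$ is a constant map for some word $w$ over $V$. *)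

theory Defs
  imports Main
begin

text \<open>Vertex set V = the finite type 'v; configurations x \<in> {0,1}^V are maps 'v \<Rightarrow> bool
  (True = 1). An arc from j to i of sign s is the triple (j, i, s).\<close>

type_synonym 'v sdigraph = "('v \<times> 'v \<times> int) set"

definition signed_digraph :: "'v sdigraph \<Rightarrow> bool" where
  "signed_digraph E \<longleftrightarrow> (\<forall>(j, i, s) \<in> E. s = 1 \<or> s = -1)"

definition simple_sdigraph :: "'v sdigraph \<Rightarrow> bool" where
  "simple_sdigraph E \<longleftrightarrow> (\<forall>j i. \<not> ((j, i, 1) \<in> E \<and> (j, i, -1) \<in> E))"

definition in_degree :: "'v sdigraph \<Rightarrow> 'v \<Rightarrow> nat" where
  "in_degree E i = card {j. \<exists>s. (j, i, s) \<in> E}"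

definition interaction_digraph :: "(('v \<Rightarrow> bool) \<Rightarrow> ('v \<Rightarrow> bool)) \<Rightarrow> 'v sdigraph" where
  "interaction_digraph f =
     {(j, i, 1) | j i. \<exists>x. \<not> x j \<and> \<not> f x i \<and> f (x(j := True)) i} \<union>
     {(j, i, -1) | j i. \<exists>x. \<not> x j \<and> f x i \<and> \<not> f (x(j := True)) i}"

definition upd_at :: "(('v \<Rightarrow> bool) \<Rightarrow> ('v \<Rightarrow> bool)) \<Rightarrow> 'v \<Rightarrow> ('v \<Rightarrow> bool) \<Rightarrow> ('v \<Rightarrow> bool)" where
  "upd_at f i x = x(i := f x i)"

text \<open>f^{i_1 ... i_l} = f^{i_l} o ... o f^{i_1}: apply i_1 first.\<close>
fun upd_word :: "(('v \<Rightarrow> bool) \<Rightarrow> ('v \<Rightarrow> bool)) \<Rightarrow> 'v list \<Rightarrow> ('v \<Rightarrow> bool) \<Rightarrow> ('v \<Rightarrow> bool)" where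
  "upd_word f [] x = x"
| "upd_word f (i # w) x = upd_word f w (upd_at f i x)"

definition synchronizing :: "(('v \<Rightarrow> bool) \<Rightarrow> ('v \<Rightarrow> bool)) \<Rightarrow> bool" where
  "synchronizing f \<longleftrightarrow> (\<exists>w c. \<forall>x. upd_word f w x = c)"

end

theory Submission
  imports Defs
begin

definition Fn :: "'v set \<Rightarrow> 'v \<Rightarrow> ('v \<Rightarrow> bool) \<Rightarrow> bool" where
  "Fn A a l = (if A - {a} = {} then l a
               else if l a then (\<exists>j\<in>A-{a}. l j) else (\<forall>j\<in>A-{a}. l j))"

lemma Fn_local: "a \<in> A \<Longrightarrow> (\<forall>m\<in>A. l m = l' m) \<Longrightarrow> Fn A a l = Fn A a l'"
  unfolding Fn_def by auto

lemma Fn_dual: "Fn A a (\<lambda>m. \<not> l m) = (\<not> Fn A a l)"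
  unfolding Fn_def by auto

lemma Fn_mono: "Fn A a (l(j := False)) \<Longrightarrow> Fn A a (l(j := True))"
  unfolding Fn_def by (auto split: if_splits)

lemma Fn_wit:
  assumes "j \<in> A" "a \<in> A" "A - {a} = {} \<or> (\<exists>b c. b \<in> A - {a} \<and> c \<in> A - {a} \<and> b \<noteq> c)"
  shows "\<exists>l. \<not> Fn A a (l(j := False)) \<and> Fn A a (l(j := True))"
proof (cases "A - {a} = {}")
  case True
  then have "j = a" using assms by auto
  then show ?thesis using True unfolding Fn_def by auto
next
  case False
  then obtain b c where bc: "b \<in> A - {a}" "c \<in> A - {a}" "b \<noteq> c" using assms by auto
  show ?thesis
  proof (cases "j = a")
    case True
    show ?thesis
      apply (rule exI[of _ "\<lambda>m. m = b"])
      using True False bc unfolding Fn_def by auto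
  next
    case ja: False
    show ?thesis
      apply (rule exI[of _ "\<lambda>m. m = a"])
      using ja False bc assms unfolding Fn_def by auto
  qed
qed

definition Nb :: "'v sdigraph \<Rightarrow> 'v \<Rightarrow> 'v set" where
  "Nb G i = {j. \<exists>s. (j, i, s) \<in> G}"

definition lit :: "'v sdigraph \<Rightarrow> 'v \<Rightarrow> ('v \<Rightarrow> bool) \<Rightarrow> 'v \<Rightarrow> bool" where
  "lit G i x = (\<lambda>m. x m = ((m, i, 1) \<in> G))"

definition bn :: "'v sdigraph \<Rightarrow> ('v \<Rightarrow> bool) \<Rightarrow> ('v \<Rightarrow> bool)" where
  "bn G x = (\<lambda>i. Fn (Nb G i) (SOME j. j \<in> Nb G i) (lit G i x))"

lemma lit_upd: "lit G i (x(j := v)) = (lit G i x)(j := (v = ((j, i, 1) \<in> G)))"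
  unfolding lit_def by auto

lemma lit_neg: "lit G i (\<lambda>m. \<not> x m) = (\<lambda>m. \<not> lit G i x m)"
  unfolding lit_def by auto

lemma bn_neg: "bn G (\<lambda>m. \<not> x m) i = (\<not> bn G x i)"
  unfolding bn_def lit_neg Fn_dual by simp

lemma upd_word_neg: "upd_word (bn G) w (\<lambda>m. \<not> x m) = (\<lambda>m. \<not> upd_word (bn G) w x m)"
proof (induction w arbitrary: x)
  case Nil
  then show ?case by simp
next
  case (Cons i w)
  have "upd_at (bn G) i (\<lambda>m. \<not> x m) = (\<lambda>m. \<not> upd_at (bn G) i x m)"
    unfolding upd_at_def using bn_neg[of G x i] by auto
  then show ?case using Cons by simp
qed

theorem proposition1:
  fixes G :: "('v::finite) sdigraph"
  assumes "signed_digraph G"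
    and "simple_sdigraph G"
    and "\<forall>i. in_degree G i \<noteq> 0 \<and> in_degree G i \<noteq> 2"
  shows "\<exists>f :: ('v \<Rightarrow> bool) \<Rightarrow> ('v \<Rightarrow> bool). interaction_digraph f = G \<and> \<not> synchronizing f"
proof (intro exI conjI)
  let ?f = "bn G"
  define a where "a i = (SOME j. j \<in> Nb G i)" for i
  have fin: "finite (Nb G i)" for i by simp
  have ne: "Nb G i \<noteq> {}" for i
    using assms(3) fin[of i] unfolding in_degree_def Nb_def by (metis card.empty)
  have aN: "a i \<in> Nb G i" for i unfolding a_def using ne[of i] by (simp add: some_in_eq)
  have cond: "Nb G i - {a i} = {} \<or> (\<exists>b c. b \<in> Nb G i - {a i} \<and> c \<in> Nb G i - {a i} \<and> b \<noteq> c)" for i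
  proof (rule ccontr)
    assume "\<not> ?thesis"
    then obtain b where "Nb G i - {a i} = {b}" by blast
    then have "Nb G i = {a i, b}" "a i \<noteq> b" using aN[of i] by auto
    then have "card (Nb G i) = 2" by simp
    then show False using assms(3) unfolding in_degree_def Nb_def by auto
  qed
  have f_eq: "?f x i = Fn (Nb G i) (a i) (lit G i x)" for x i unfolding bn_def a_def by simp
  have sgn: "s = 1 \<or> s = -1" if "(j, i, s) \<in> G" for j i s
    using assms(1) that unfolding signed_digraph_def by auto
  have simp': "\<not> ((j, i, 1) \<in> G \<and> (j, i, -1) \<in> G)" for j i
    using assms(2) unfolding simple_sdigraph_def by auto
  have inN: "j \<in> Nb G i \<longleftrightarrow> (j, i, 1) \<in> G \<or> (j, i, -1) \<in> G" for j i
    unfolding Nb_def using sgn by blast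
  have loc: "?f (x(j := True)) i = ?f x i" if "j \<notin> Nb G i" for x j i
    unfolding f_eq by (rule Fn_local[OF aN]) (use that in \<open>auto simp: lit_def\<close>)
  have pos: "(\<exists>x. \<not> x j \<and> \<not> ?f x i \<and> ?f (x(j := True)) i) \<longleftrightarrow> (j, i, 1) \<in> G" for j i
  proof
    assume "\<exists>x. \<not> x j \<and> \<not> ?f x i \<and> ?f (x(j := True)) i"
    then obtain x where x: "\<not> x j" "\<not> ?f x i" "?f (x(j := True)) i" by blast
    then have jN: "j \<in> Nb G i" using loc by metis
    show "(j, i, 1) \<in> G"
    proof (rule ccontr)
      assume np: "(j, i, 1) \<notin> G"
      have e1: "lit G i x = (lit G i x)(j := True)" using x(1) np unfolding lit_def by (auto simp: fun_eq_iff)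
      have e2: "lit G i (x(j := True)) = (lit G i x)(j := False)" using np by (simp add: lit_upd)
      show False using x(2,3) Fn_mono[of "Nb G i" "a i" "lit G i x" j] e1 e2 unfolding f_eq by metis
    qed
  next
    assume p: "(j, i, 1) \<in> G"
    then have jN: "j \<in> Nb G i" using inN by blast
    obtain l where l: "\<not> Fn (Nb G i) (a i) (l(j := False))" "Fn (Nb G i) (a i) (l(j := True))"
      using Fn_wit[OF jN aN cond] by blast
    define x where "x m = (if m = j then False else (l m = ((m, i, 1) \<in> G)))" for m
    have e1: "lit G i x = l(j := False)" (is "?l = ?r") proof (rule ext) fix m show "?l m = ?r m" using p by (cases "m = j"; cases "(m, i, 1) \<in> G"; simp add: x_def lit_def) qed
    have e2: "lit G i (x(j := True)) = l(j := True)" (is "?l = ?r") proof (rule ext) fix m show "?l m = ?r m" using p by (cases "m = j"; cases "(m, i, 1) \<in> G"; simp add: x_def lit_def) qed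
    show "\<exists>x. \<not> x j \<and> \<not> ?f x i \<and> ?f (x(j := True)) i"
      proof (rule exI[of _ x])
        have "\<not> x j" by (simp add: x_def)
        then show "\<not> x j \<and> \<not> ?f x i \<and> ?f (x(j := True)) i" using l unfolding f_eq e1 e2 by simp
      qed
  qed
  have neg: "(\<exists>x. \<not> x j \<and> ?f x i \<and> \<not> ?f (x(j := True)) i) \<longleftrightarrow> (j, i, -1) \<in> G" for j i
  proof
    assume "\<exists>x. \<not> x j \<and> ?f x i \<and> \<not> ?f (x(j := True)) i"
    then obtain x where x: "\<not> x j" "?f x i" "\<not> ?f (x(j := True)) i" by blast
    then have jN: "j \<in> Nb G i" using loc by metis
    show "(j, i, -1) \<in> G"
    proof (rule ccontr)
      assume "(j, i, -1) \<notin> G"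
      then have np: "(j, i, 1) \<in> G" using jN inN by blast
      have e1: "lit G i x = (lit G i x)(j := False)" using x(1) np unfolding lit_def by (auto simp: fun_eq_iff)
      have e2: "lit G i (x(j := True)) = (lit G i x)(j := True)" using np by (simp add: lit_upd)
      show False using x(2,3) Fn_mono[of "Nb G i" "a i" "lit G i x" j] e1 e2 unfolding f_eq by metis
    qed
  next
    assume p: "(j, i, -1) \<in> G"
    then have jN: "j \<in> Nb G i" using inN by blast
    have np: "(j, i, 1) \<notin> G" using p simp' by blast
    obtain l where l: "\<not> Fn (Nb G i) (a i) (l(j := False))" "Fn (Nb G i) (a i) (l(j := True))"
      using Fn_wit[OF jN aN cond] by blast
    define x where "x m = (if m = j then False else (l m = ((m, i, 1) \<in> G)))" for m
    have e1: "lit G i x = l(j := True)" (is "?l = ?r") proof (rule ext) fix m show "?l m = ?r m" using np by (cases "m = j"; cases "(m, i, 1) \<in> G"; simp add: x_def lit_def) qed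
    have e2: "lit G i (x(j := True)) = l(j := False)" (is "?l = ?r") proof (rule ext) fix m show "?l m = ?r m" using np by (cases "m = j"; cases "(m, i, 1) \<in> G"; simp add: x_def lit_def) qed
    show "\<exists>x. \<not> x j \<and> ?f x i \<and> \<not> ?f (x(j := True)) i"
      proof (rule exI[of _ x])
        have "\<not> x j" by (simp add: x_def)
        then show "\<not> x j \<and> ?f x i \<and> \<not> ?f (x(j := True)) i" using l unfolding f_eq e1 e2 by simp
      qed
  qed
  show "interaction_digraph ?f = G"
  proof (rule set_eqI)
    fix t :: "'v \<times> 'v \<times> int"
    obtain j i s where t: "t = (j, i, s)" by (cases t) auto
    show "t \<in> interaction_digraph ?f \<longleftrightarrow> t \<in> G"
    proof (cases "s = 1 \<or> s = -1")
      case True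
      then show ?thesis
      proof
        assume "s = 1" then show ?thesis using pos[of j i] unfolding t interaction_digraph_def by auto
      next
        assume "s = -1" then show ?thesis using neg[of j i] unfolding t interaction_digraph_def by auto
      qed
    next
      case False
      then show ?thesis using sgn[of j i s] unfolding t interaction_digraph_def by auto
    qed
  qed
  show "\<not> synchronizing ?f"
  proof
    assume "synchronizing ?f"
    then obtain w c where wc: "\<forall>x. upd_word ?f w x = c" unfolding synchronizing_def by blast
    have "c = (\<lambda>m. \<not> c m)"
      using wc upd_word_neg[of G w "\<lambda>_. True"] by simp
    then show False by (simp add: fun_eq_iff)
  qed
qed

end
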